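(* Let $S:\mathbb{R}^d\to\mathbb{R}$ be real analytic in a neighborhood of the origin, and let $\beta^1,\dots,\beta^k\in\mathbb{N}^d$. There is a constant $C$ such that for all $x$ sufficiently close to the origin with all coordinates nonzero and all $1\le i\le k$, $$|\partial^{\beta^i}S(x)|\le C\sup_{\alpha\in\mathcal{N}(S)}|x^{\alpha-\beta^i}|,$$ where $|x^{\gamma}|=\prod_j|x_j|^{\gamma_j}$.
   Context: $\mathbb{N}=\{0,1,2,\dots\}$, $\partial^\beta=\partial_1^{\beta_1}\cdots\partial_d^{\beta_d}$. Writing $S(x)=\sum_{\alpha}c_\alpha x^\alpha$ near the origin, $\mathcal{N}(S)$ is the convex hull of $\bigcup_{c_\alpha\ne0}(\alpha+[0,\infty)^d)$. *)

theory Defs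
  imports "HOL-Analysis.Analysis"
begin

definition monomial :: "('n::finite \<Rightarrow> nat) \<Rightarrow> real^'n \<Rightarrow> real" where
  "monomial \<alpha> x = (\<Prod>j\<in>UNIV. (x $ j) ^ (\<alpha> j))"

definition partial :: "'n::finite \<Rightarrow> (real^'n \<Rightarrow> real) \<Rightarrow> real^'n \<Rightarrow> real" where
  "partial j f x = deriv (\<lambda>t. f (x + t *\<^sub>R axis j 1)) 0"

text \<open>A fixed enumeration of the coordinates (the order is irrelevant for the
  analytic functions considered, since mixed partials commute).\<close>
definition coord_list :: "'n::finite list" where
  "coord_list = (SOME xs. distinct xs \<and> set xs = UNIV)"

definition mixed_partial :: "('n::finite \<Rightarrow> nat) \<Rightarrow> (real^'n \<Rightarrow> real) \<Rightarrow> real^'n \<Rightarrow> real" where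
  "mixed_partial \<beta> f = foldr (\<lambda>j g. (partial j ^^ \<beta> j) g) coord_list f"

definition newton_polyhedron :: "(('n::finite \<Rightarrow> nat) \<Rightarrow> real) \<Rightarrow> (real^'n) set" where
  "newton_polyhedron c =
     convex hull (\<Union>\<alpha>\<in>{\<alpha>. c \<alpha> \<noteq> 0}. {v. \<forall>j. real (\<alpha> j) \<le> v $ j})"

definition abs_mono :: "real^'n \<Rightarrow> real^'n::finite \<Rightarrow> real" where
  "abs_mono x \<gamma> = (\<Prod>j\<in>UNIV. \<bar>x $ j\<bar> powr (\<gamma> $ j))"

end

theory Submission
  imports Defs "HOL-Library.Countable"
begin

lemma termwise_deriv_nat:
  fixes f f' :: "nat \<Rightarrow> real \<Rightarrow> real" and M :: "nat \<Rightarrow> real"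
  assumes R: "R > 0"
    and der: "\<And>n t. \<bar>t\<bar> < R \<Longrightarrow> (f n has_real_derivative f' n t) (at t)"
    and bnd: "\<And>n t. \<bar>t\<bar> < R \<Longrightarrow> \<bar>f' n t\<bar> \<le> M n"
    and sM: "summable M"
    and s0: "summable (\<lambda>n. f n 0)"
  shows "((\<lambda>t. \<Sum>n. f n t) has_real_derivative (\<Sum>n. f' n 0)) (at 0)"
proof (rule has_field_derivative_series'(2)[where S="ball 0 R" and x0=0])
  show "convex (ball (0::real) R)" by simp
  show "(f n has_real_derivative f' n t) (at t within ball 0 R)" if "t \<in> ball 0 R" for n t
    using der[of t n] that by (auto intro: has_field_derivative_at_within)
  show "uniformly_convergent_on (ball 0 R) (\<lambda>n t. \<Sum>i<n. f' i t)"
    unfolding uniformly_convergent_on_def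
    by (rule exI, rule Weierstrass_m_test_ev[OF _ sM]) (use bnd in auto)
  show "(0::real) \<in> ball 0 R" "summable (\<lambda>n. f n 0)" "(0::real) \<in> interior (ball 0 R)"
    using R s0 by auto
qed

lemma termwise_deriv:
  fixes F F' :: "'a::countable \<Rightarrow> real \<Rightarrow> real" and M :: "'a \<Rightarrow> real" and H :: "real \<Rightarrow> real"
  assumes inf: "infinite (UNIV :: 'a set)"
    and R: "R > 0"
    and der: "\<And>a t. \<bar>t\<bar> < R \<Longrightarrow> (F a has_real_derivative F' a t) (at t)"
    and bnd: "\<And>a t. \<bar>t\<bar> < R \<Longrightarrow> \<bar>F' a t\<bar> \<le> M a"
    and sM: "M summable_on UNIV"
    and hs: "\<And>t. \<bar>t\<bar> < R \<Longrightarrow> ((\<lambda>a. F a t) has_sum H t) UNIV"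
  shows "(H has_real_derivative (\<Sum>\<^sub>\<infinity>a. F' a 0)) (at 0)"
proof -
  obtain e :: "'a \<Rightarrow> nat" where e: "bij_betw e UNIV UNIV"
    using countableE_infinite[OF countableI_type inf] by blast
  define g where "g = inv e"
  have g: "bij_betw g UNIV UNIV" unfolding g_def using e by (simp add: bij_betw_inv_into)
  have reidx: "((\<lambda>n. h (g n)) has_sum s) UNIV \<longleftrightarrow> (h has_sum s) UNIV" for h :: "'a \<Rightarrow> real" and s
    using has_sum_reindex_bij_betw[OF g] .
  have M0: "M a \<ge> 0" for a using bnd[of 0 a] R by (smt (verit))
  have "((\<lambda>n. M (g n)) has_sum infsum M UNIV) UNIV"
    using reidx has_sum_infsum[OF sM] by blast
  then have "summable (\<lambda>n. M (g n))"
    using has_sum_imp_sums sums_summable by blast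
  note sMg = this
  have sF: "(\<lambda>n. F (g n) t) sums H t" if "\<bar>t\<bar> < R" for t
    using hs[OF that] reidx has_sum_imp_sums by blast
  have "summable (\<lambda>n. F (g n) 0)" using sF[of 0] R by (auto simp: sums_iff)
  then have main: "((\<lambda>t. \<Sum>n. F (g n) t) has_real_derivative (\<Sum>n. F' (g n) 0)) (at 0)"
    by (intro termwise_deriv_nat[where M="\<lambda>n. M (g n)", OF R der bnd sMg])
  have sF': "(\<lambda>a. F' a 0) summable_on UNIV"
  proof -
    have "(\<lambda>a. norm (F' a 0)) summable_on UNIV"
      by (rule summable_on_comparison_test[OF sM]) (use bnd R in auto)
    then show ?thesis by (rule abs_summable_summable)
  qed
  have "(\<lambda>n. F' (g n) 0) sums (\<Sum>\<^sub>\<infinity>a. F' a 0)"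
    using has_sum_infsum[OF sF'] reidx has_sum_imp_sums by blast
  then have eq: "(\<Sum>n. F' (g n) 0) = (\<Sum>\<^sub>\<infinity>a. F' a 0)" by (simp add: sums_iff)
  show ?thesis
    apply (rule has_field_derivative_transform_within_open[where S="ball 0 R"])
    using main eq apply simp
    using R sF by (auto simp: sums_iff)
qed

definition deg :: "('n::finite \<Rightarrow> nat) \<Rightarrow> nat" where
  "deg q = sum q UNIV"

definition rep :: "(real^'n::finite \<Rightarrow> real) \<Rightarrow> (('n \<Rightarrow> nat) \<Rightarrow> real) \<Rightarrow> (('n \<Rightarrow> nat) \<Rightarrow> ('n \<Rightarrow> nat)) \<Rightarrow> real \<Rightarrow> bool" where
  "rep g c p \<rho> \<longleftrightarrow> 0 < \<rho> \<and> \<rho> \<le> 1 \<and> (\<lambda>\<alpha>. \<bar>c \<alpha>\<bar> * \<rho> ^ deg (p \<alpha>)) summable_on UNIV \<and>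
     (\<forall>x. (\<forall>k. \<bar>x $ k\<bar> < \<rho>) \<longrightarrow> ((\<lambda>\<alpha>. c \<alpha> * monomial (p \<alpha>) x) has_sum g x) UNIV)"

lemma mono_axis: "monomial q (x + t *\<^sub>R axis j 1) = monomial (q(j:=0)) x * (x$j + t)^(q j)"
proof -
  have "monomial q (x + t *\<^sub>R axis j 1) = (x$j + t)^(q j) * (\<Prod>k\<in>UNIV-{j}. (x $ k) ^ q k)"
    unfolding monomial_def
    by (subst prod.remove[of UNIV j]) (auto simp: axis_def intro!: prod.cong)
  moreover have "monomial (q(j:=0)) x = (\<Prod>k\<in>UNIV-{j}. (x $ k) ^ q k)"
    unfolding monomial_def
    by (subst prod.remove[of UNIV j]) (auto intro!: prod.cong)
  ultimately show ?thesis by simp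
qed

lemma abs_mono_le: assumes "\<And>k. \<bar>y $ k\<bar> \<le> r" shows "\<bar>monomial q y\<bar> \<le> r ^ deg q"
proof -
  have "\<bar>monomial q y\<bar> = (\<Prod>k\<in>UNIV. \<bar>y $ k\<bar> ^ q k)"
    unfolding monomial_def by (simp add: abs_prod power_abs)
  also have "\<dots> \<le> (\<Prod>k\<in>UNIV. r ^ q k)"
    by (rule prod_mono) (use assms in \<open>auto intro: power_mono\<close>)
  also have "\<dots> = r ^ deg q" unfolding deg_def by (simp add: power_sum)
  finally show ?thesis .
qed

lemma deg_dec: assumes "q j \<ge> 1" shows "deg (q(j := q j - 1)) + 1 = deg q"
proof -
  have "deg q = q j + sum q (UNIV - {j})" unfolding deg_def by (subst sum.remove[of UNIV j]) auto
  moreover have "deg (q(j := q j - 1)) = (q j - 1) + sum q (UNIV - {j})"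
    unfolding deg_def by (subst sum.remove[of UNIV j]) (auto intro!: sum.cong)
  ultimately show ?thesis using assms by simp
qed

lemma key_ineq: assumes "n \<le> D + 1" "0 < \<rho>" shows "real n * (\<rho>/2) ^ D \<le> \<rho> ^ D"
proof -
  have "D < 2 ^ D" by (rule less_exp)
  then have "real n \<le> 2 ^ D" using assms(1)
    by (metis Suc_eq_plus1 Suc_leI le_trans of_nat_le_iff of_nat_numeral of_nat_power)
  then have "real n * (\<rho>/2) ^ D \<le> 2 ^ D * (\<rho>/2) ^ D"
    using assms by (intro mult_right_mono) auto
  also have "\<dots> = \<rho> ^ D" by (simp add: power_divide)
  finally show ?thesis .
qed

lemma infinite_multi: "infinite (UNIV :: ('n::finite \<Rightarrow> nat) set)"
proof -
  have "inj (\<lambda>k::nat. (\<lambda>_::'n. k))" by (auto simp: inj_on_def fun_eq_iff)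
  then have "infinite (range (\<lambda>k::nat. (\<lambda>_::'n. k)))" by (rule range_inj_infinite)
  then show ?thesis by (rule infinite_super[OF subset_UNIV])
qed

lemma rep_partial:
  assumes "rep g c p \<rho>"
  shows "rep (partial j g) (\<lambda>\<alpha>. c \<alpha> * real (p \<alpha> j)) (\<lambda>\<alpha>. (p \<alpha>)(j := p \<alpha> j - 1)) (\<rho>/4)"
proof -
  define p' where "p' \<alpha> = (p \<alpha>)(j := p \<alpha> j - 1)" for \<alpha>
  from assms have \<rho>: "0 < \<rho>" "\<rho> \<le> 1" and summ: "(\<lambda>\<alpha>. \<bar>c \<alpha>\<bar> * \<rho> ^ deg (p \<alpha>)) summable_on UNIV"
    and hs: "\<And>x. (\<forall>k. \<bar>x $ k\<bar> < \<rho>) \<Longrightarrow> ((\<lambda>\<alpha>. c \<alpha> * monomial (p \<alpha>) x) has_sum g x) UNIV"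
    unfolding rep_def by auto
  define M where "M \<alpha> = \<bar>c \<alpha>\<bar> * \<rho> ^ deg (p \<alpha>) * (1 / \<rho>)" for \<alpha>
  have sM: "M summable_on UNIV" unfolding M_def by (rule summable_on_cmult_left[OF summ])
  have B: "\<bar>c \<alpha> * real (p \<alpha> j)\<bar> * r' ^ deg (p' \<alpha>) \<le> M \<alpha>" if "0 \<le> r'" "r' \<le> \<rho>/2" for \<alpha> r'
  proof (cases "p \<alpha> j = 0")
    case True then show ?thesis using \<rho> by (simp add: M_def)
  next
    case False
    then have D: "deg (p' \<alpha>) + 1 = deg (p \<alpha>)" unfolding p'_def by (intro deg_dec) auto
    have "p \<alpha> j \<le> deg (p \<alpha>)" unfolding deg_def by (rule member_le_sum) auto
    then have n: "p \<alpha> j \<le> deg (p' \<alpha>) + 1" using D by simp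
    have "\<bar>c \<alpha> * real (p \<alpha> j)\<bar> * r' ^ deg (p' \<alpha>) = \<bar>c \<alpha>\<bar> * (real (p \<alpha> j) * r' ^ deg (p' \<alpha>))"
      by (simp add: abs_mult)
    also have "\<dots> \<le> \<bar>c \<alpha>\<bar> * (real (p \<alpha> j) * (\<rho>/2) ^ deg (p' \<alpha>))"
      using that by (intro mult_left_mono power_mono) auto
    also have "\<dots> \<le> \<bar>c \<alpha>\<bar> * \<rho> ^ deg (p' \<alpha>)"
      by (intro mult_left_mono key_ineq n \<rho>) auto
    also have "\<dots> = M \<alpha>" unfolding M_def using \<rho> D[symmetric] by simp
    finally show ?thesis .
  qed
  have summ': "(\<lambda>\<alpha>. \<bar>c \<alpha> * real (p \<alpha> j)\<bar> * (\<rho>/4) ^ deg (p' \<alpha>)) summable_on UNIV"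
    by (rule summable_on_comparison_test[OF sM]) (use B \<rho> in auto)
  have main: "((\<lambda>\<alpha>. c \<alpha> * real (p \<alpha> j) * monomial (p' \<alpha>) x) has_sum partial j g x) UNIV"
    if x: "\<forall>k. \<bar>x $ k\<bar> < \<rho>/4" for x
  proof -
    define H where "H t = g (x + t *\<^sub>R axis j 1)" for t
    define F where "F \<alpha> t = c \<alpha> * monomial (p \<alpha>) (x + t *\<^sub>R axis j 1)" for \<alpha> t
    define F' where "F' \<alpha> t = c \<alpha> * real (p \<alpha> j) * monomial (p' \<alpha>) (x + t *\<^sub>R axis j 1)" for \<alpha> t
    have yb: "\<bar>(x + t *\<^sub>R axis j 1) $ k\<bar> \<le> \<rho>/2" if "\<bar>t\<bar> < \<rho>/4" for t k
      using x[rule_format, of k] that by (auto simp: axis_def abs_if split: if_splits)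
    have der: "(F \<alpha> has_real_derivative F' \<alpha> t) (at t)" for \<alpha> t
    proof -
      have e1: "F \<alpha> = (\<lambda>t. c \<alpha> * (monomial ((p \<alpha>)(j:=0)) x * (x$j + t)^(p \<alpha> j)))"
        unfolding F_def by (simp add: mono_axis)
      have e2: "F' \<alpha> t = c \<alpha> * (monomial ((p \<alpha>)(j:=0)) x * (real (p \<alpha> j) * (x$j + t)^(p \<alpha> j - 1) * 1))"
        unfolding F'_def p'_def by (simp add: mono_axis)
      show ?thesis unfolding e1 e2
        by (intro DERIV_cmult DERIV_pow DERIV_add DERIV_const DERIV_ident) (auto intro!: derivative_eq_intros)
    qed
    have bnd: "\<bar>F' \<alpha> t\<bar> \<le> M \<alpha>" if "\<bar>t\<bar> < \<rho>/4" for \<alpha> t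
    proof -
      have "\<bar>F' \<alpha> t\<bar> = \<bar>c \<alpha> * real (p \<alpha> j)\<bar> * \<bar>monomial (p' \<alpha>) (x + t *\<^sub>R axis j 1)\<bar>"
        unfolding F'_def by (simp add: abs_mult)
      also have "\<dots> \<le> \<bar>c \<alpha> * real (p \<alpha> j)\<bar> * (\<rho>/2) ^ deg (p' \<alpha>)"
        by (intro mult_left_mono abs_mono_le yb that) auto
      also have "\<dots> \<le> M \<alpha>" using B[of "\<rho>/2" \<alpha>] \<rho> by simp
      finally show ?thesis .
    qed
    have hsF: "((\<lambda>\<alpha>. F \<alpha> t) has_sum H t) UNIV" if "\<bar>t\<bar> < \<rho>/4" for t
      unfolding F_def H_def
    proof (rule hs, intro allI)
      fix k show "\<bar>(x + t *\<^sub>R axis j 1) $ k\<bar> < \<rho>"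
        by (rule le_less_trans[OF yb[OF that]]) (use \<rho> in simp)
    qed
    have "(H has_real_derivative (\<Sum>\<^sub>\<infinity>\<alpha>. F' \<alpha> 0)) (at 0)"
      by (rule termwise_deriv[where R="\<rho>/4", OF infinite_multi _ der bnd sM hsF]) (use \<rho> in auto)
    then have pj: "partial j g x = (\<Sum>\<^sub>\<infinity>\<alpha>. F' \<alpha> 0)"
      unfolding partial_def H_def[symmetric] by (rule DERIV_imp_deriv)
    have "(\<lambda>\<alpha>. norm (F' \<alpha> 0)) summable_on UNIV"
      by (rule summable_on_comparison_test[OF sM]) (use bnd \<rho> in auto)
    then have "(\<lambda>\<alpha>. F' \<alpha> 0) summable_on UNIV" by (rule abs_summable_summable)
    from has_sum_infsum[OF this] show ?thesis unfolding pj F'_def by simp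
  qed
  show ?thesis unfolding rep_def p'_def[symmetric] using \<rho> summ' main by auto
qed

definition Inv :: "(('n::finite \<Rightarrow> nat) \<Rightarrow> real) \<Rightarrow> (real^'n \<Rightarrow> real) \<Rightarrow> ('n \<Rightarrow> nat) \<Rightarrow> bool" where
  "Inv c g \<delta> \<longleftrightarrow> (\<exists>c' p \<rho>. rep g c' p \<rho> \<and> (\<forall>\<alpha>. c' \<alpha> \<noteq> 0 \<longrightarrow> c \<alpha> \<noteq> 0 \<and> (\<forall>k. p \<alpha> k + \<delta> k = \<alpha> k)))"

lemma Inv_partial: assumes "Inv c g \<delta>" shows "Inv c (partial j g) (\<delta>(j := \<delta> j + 1))"
proof -
  from assms obtain c' p \<rho> where r: "rep g c' p \<rho>" and i: "\<And>\<alpha>. c' \<alpha> \<noteq> 0 \<Longrightarrow> c \<alpha> \<noteq> 0 \<and> (\<forall>k. p \<alpha> k + \<delta> k = \<alpha> k)"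
    unfolding Inv_def by blast
  have "\<forall>\<alpha>. c' \<alpha> * real (p \<alpha> j) \<noteq> 0 \<longrightarrow> c \<alpha> \<noteq> 0 \<and> (\<forall>k. ((p \<alpha>)(j := p \<alpha> j - 1)) k + (\<delta>(j := \<delta> j + 1)) k = \<alpha> k)"
  proof (intro allI impI)
    fix \<alpha> assume a: "c' \<alpha> * real (p \<alpha> j) \<noteq> 0"
    then have "c' \<alpha> \<noteq> 0" and pj: "p \<alpha> j \<ge> 1" by auto
    from i[OF this(1)] have h: "c \<alpha> \<noteq> 0" "\<And>k. p \<alpha> k + \<delta> k = \<alpha> k" by auto
    have "((p \<alpha>)(j := p \<alpha> j - 1)) k + (\<delta>(j := \<delta> j + 1)) k = \<alpha> k" for k
      using h(2)[of k] pj by (cases "k = j") auto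
    with h(1) show "c \<alpha> \<noteq> 0 \<and> (\<forall>k. ((p \<alpha>)(j := p \<alpha> j - 1)) k + (\<delta>(j := \<delta> j + 1)) k = \<alpha> k)"
      by blast
  qed
  with rep_partial[OF r, of j] show ?thesis unfolding Inv_def by blast
qed

lemma Inv_pow: assumes "Inv c g \<delta>" shows "Inv c ((partial j ^^ n) g) (\<delta>(j := \<delta> j + n))"
proof (induction n)
  case 0 then show ?case using assms by simp
next
  case (Suc n)
  have e: "(\<delta>(j := \<delta> j + n))(j := (\<delta>(j := \<delta> j + n)) j + 1) = \<delta>(j := \<delta> j + Suc n)" by simp
  have f: "(partial j ^^ Suc n) g = partial j ((partial j ^^ n) g)" by simp
  from Inv_partial[OF Suc.IH, of j] show ?case unfolding e f .
qed

lemma Inv_foldr: assumes "distinct xs" "Inv c g (\<lambda>_. 0)"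
  shows "Inv c (foldr (\<lambda>j g. (partial j ^^ \<beta> j) g) xs g) (\<lambda>k. if k \<in> set xs then \<beta> k else 0)"
  using assms(1)
proof (induction xs)
  case Nil then show ?case using assms(2) by simp
next
  case (Cons j xs)
  then have IH: "Inv c (foldr (\<lambda>j g. (partial j ^^ \<beta> j) g) xs g) (\<lambda>k. if k \<in> set xs then \<beta> k else 0)"
    and nj: "j \<notin> set xs" by auto
  have eq: "(\<lambda>k. if k \<in> set xs then \<beta> k else 0)(j := (if j \<in> set xs then \<beta> j else 0) + \<beta> j)
      = (\<lambda>k. if k \<in> set (j # xs) then \<beta> k else 0)" using nj by (auto simp: fun_eq_iff)
  have f: "foldr (\<lambda>j g. (partial j ^^ \<beta> j) g) (j # xs) g = (partial j ^^ \<beta> j) (foldr (\<lambda>j g. (partial j ^^ \<beta> j) g) xs g)"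
    by simp
  show ?case using Inv_pow[OF IH, where j=j and n="\<beta> j"] unfolding eq f .
qed

lemma coord_list: "distinct (coord_list :: 'n::finite list) \<and> set (coord_list :: 'n list) = UNIV"
proof -
  have "finite (UNIV :: 'n set)" by simp
  then have "\<exists>xs :: 'n list. distinct xs \<and> set xs = UNIV"
    using finite_distinct_list by blast
  then show ?thesis unfolding coord_list_def by (rule someI_ex)
qed

lemma Inv_mixed: fixes S :: "real^'n::finite \<Rightarrow> real" assumes "Inv c S (\<lambda>_. 0)" shows "Inv c (mixed_partial \<beta> S) \<beta>"
proof -
  have s: "set (coord_list :: 'n list) = UNIV" using coord_list by blast
  show ?thesis
    using Inv_foldr[OF conjunct1[OF coord_list] assms, of \<beta>] unfolding mixed_partial_def s by simp
qed

lemma dickson_gen: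
  fixes A :: "('n \<Rightarrow> nat) set"
  assumes "finite I"
  shows "\<exists>F. finite F \<and> F \<subseteq> A \<and> (\<forall>\<gamma>\<in>A. \<exists>\<mu>\<in>F. \<forall>k\<in>I. \<mu> k \<le> \<gamma> k)"
  using assms
proof (induction I arbitrary: A rule: finite_induct)
  case empty
  show ?case
  proof (cases "A = {}")
    case True then show ?thesis by auto
  next
    case False then obtain a where "a \<in> A" by blast
    then show ?thesis by (intro exI[of _ "{a}"]) auto
  qed
next
  case (insert i I)
  obtain F0 where F0: "finite F0" "F0 \<subseteq> A" "\<forall>\<gamma>\<in>A. \<exists>\<mu>\<in>F0. \<forall>k\<in>I. \<mu> k \<le> \<gamma> k"
    using insert.IH[of A] by blast
  have "\<forall>v. \<exists>G. finite G \<and> G \<subseteq> {\<gamma>\<in>A. \<gamma> i = v} \<and> (\<forall>\<gamma>\<in>{\<gamma>\<in>A. \<gamma> i = v}. \<exists>\<mu>\<in>G. \<forall>k\<in>I. \<mu> k \<le> \<gamma> k)"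
    using insert.IH by blast
  then obtain G where G0: "\<forall>v. finite (G v) \<and> G v \<subseteq> {\<gamma>\<in>A. \<gamma> i = v} \<and> (\<forall>\<gamma>\<in>{\<gamma>\<in>A. \<gamma> i = v}. \<exists>\<mu>\<in>G v. \<forall>k\<in>I. \<mu> k \<le> \<gamma> k)"
    by (rule exE[OF choice])
  then have G: "\<And>v. finite (G v)" "\<And>v. G v \<subseteq> {\<gamma>\<in>A. \<gamma> i = v}"
    "\<And>v. \<forall>\<gamma>\<in>{\<gamma>\<in>A. \<gamma> i = v}. \<exists>\<mu>\<in>G v. \<forall>k\<in>I. \<mu> k \<le> \<gamma> k"
    by auto
  define m where "m = Max ((\<lambda>\<mu>. \<mu> i) ` F0)"
  define F where "F = F0 \<union> (\<Union>v\<in>{..m}. G v)"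
  have "finite F" unfolding F_def using F0(1) G(1) by auto
  moreover have "F \<subseteq> A" unfolding F_def using F0(2) G(2) by blast
  moreover have "\<exists>\<mu>\<in>F. \<forall>k\<in>insert i I. \<mu> k \<le> \<gamma> k" if g: "\<gamma> \<in> A" for \<gamma>
  proof -
    obtain \<mu>0 where m0: "\<mu>0 \<in> F0" "\<forall>k\<in>I. \<mu>0 k \<le> \<gamma> k" using F0(3) g by blast
    show ?thesis
    proof (cases "\<mu>0 i \<le> \<gamma> i")
      case True then show ?thesis using m0 unfolding F_def by blast
    next
      case False
      have "\<mu>0 i \<le> m" unfolding m_def using m0(1) F0(1) by (intro Max_ge) auto
      with False have gm: "\<gamma> i \<in> {..m}" by simp
      obtain \<mu> where "\<mu> \<in> G (\<gamma> i)" "\<forall>k\<in>I. \<mu> k \<le> \<gamma> k" using G(3)[of "\<gamma> i"] g by blast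
      moreover then have "\<mu> i = \<gamma> i" using G(2) by blast
      ultimately show ?thesis unfolding F_def using gm by (intro bexI[of _ \<mu>]) auto
    qed
  qed
  ultimately show ?case by blast
qed

lemma dickson:
  fixes A :: "('n::finite \<Rightarrow> nat) set"
  obtains F where "finite F" "F \<subseteq> A" "\<And>\<gamma>. \<gamma> \<in> A \<Longrightarrow> \<exists>\<mu>\<in>F. \<forall>k. \<mu> k \<le> \<gamma> k"
proof -
  have "finite (UNIV :: 'n set)" by simp
  from dickson_gen[OF this, of A] show ?thesis using that by auto
qed

lemma monomial_const: "monomial \<alpha> (\<chi> k. a) = a ^ deg \<alpha>"
  unfolding monomial_def deg_def by (simp add: power_sum)

lemma Inv_base:
  fixes S :: "real^'n::finite \<Rightarrow> real"
  assumes r: "r > 0"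
    and series: "\<And>x. norm x < r \<Longrightarrow> ((\<lambda>\<alpha>. c \<alpha> * monomial \<alpha> x) has_sum S x) UNIV"
  shows "Inv c S (\<lambda>_. 0)"
proof -
  define \<rho> where "\<rho> = min (1/2) (r / (2 * real CARD('n)))"
  have \<rho>: "0 < \<rho>" "\<rho> \<le> 1" unfolding \<rho>_def using r by auto
  have nx: "norm x < r" if "\<forall>k. \<bar>x $ k\<bar> \<le> \<rho>" for x :: "real^'n"
  proof -
    have "norm x \<le> (\<Sum>k\<in>UNIV. \<bar>x $ k\<bar>)" by (rule norm_le_l1_cart)
    also have "\<dots> \<le> real (card (UNIV :: 'n set)) * \<rho>"
      using sum_bounded_above[of UNIV "\<lambda>k. \<bar>x $ k\<bar>" \<rho>] that by auto
    also have "\<dots> \<le> real CARD('n) * (r / (2 * real CARD('n)))"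
      unfolding \<rho>_def by (intro mult_left_mono) auto
    also have "\<dots> = r / 2" by simp
    also have "\<dots> < r" using r by simp
    finally show ?thesis .
  qed
  have "((\<lambda>\<alpha>. c \<alpha> * monomial \<alpha> (\<chi> k. \<rho>)) has_sum S (\<chi> k. \<rho>)) UNIV"
    by (rule series, rule nx) (use \<rho> in simp)
  then have "(\<lambda>\<alpha>. c \<alpha> * \<rho> ^ deg \<alpha>) summable_on UNIV"
    unfolding monomial_const by (rule has_sum_imp_summable)
  then have "(\<lambda>\<alpha>. norm (c \<alpha> * \<rho> ^ deg \<alpha>)) summable_on UNIV"
    by (rule summable_on_iff_abs_summable_on_real[THEN iffD1])
  then have "(\<lambda>\<alpha>. \<bar>c \<alpha> * \<rho> ^ deg \<alpha>\<bar>) summable_on UNIV"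
    by (simp only: real_norm_def)
  then have s: "(\<lambda>\<alpha>. \<bar>c \<alpha>\<bar> * \<rho> ^ deg (id \<alpha>)) summable_on UNIV"
    using \<rho> by (simp add: abs_mult)
  have "\<forall>x. (\<forall>k. \<bar>x $ k\<bar> < \<rho>) \<longrightarrow> ((\<lambda>\<alpha>. c \<alpha> * monomial (id \<alpha>) x) has_sum S x) UNIV"
  proof (intro allI impI)
    fix x :: "real^'n" assume "\<forall>k. \<bar>x $ k\<bar> < \<rho>"
    then have "\<forall>k. \<bar>x $ k\<bar> \<le> \<rho>" by (simp add: less_imp_le)
    then show "((\<lambda>\<alpha>. c \<alpha> * monomial (id \<alpha>) x) has_sum S x) UNIV"
      unfolding id_def by (intro series nx)
  qed
  then have "rep S c id \<rho>"
    unfolding rep_def using \<rho> s by blast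
  moreover have "\<forall>\<alpha>. c \<alpha> \<noteq> 0 \<longrightarrow> c \<alpha> \<noteq> 0 \<and> (\<forall>k. id \<alpha> k + 0 = \<alpha> k)" by simp
  ultimately show ?thesis unfolding Inv_def by blast
qed

lemma abs_mono_exp:
  assumes "\<forall>k. x $ k \<noteq> 0"
  shows "abs_mono x w = exp (\<Sum>k\<in>UNIV. w $ k * ln \<bar>x $ k\<bar>)"
  unfolding abs_mono_def using assms by (simp add: powr_def exp_sum)

lemma abs_mono_nonneg: "abs_mono x w \<ge> 0"
  unfolding abs_mono_def by (intro prod_nonneg) auto

lemma hull_sub:
  fixes x :: "real^'n::finite"
  assumes "\<forall>k. x $ k \<noteq> 0 \<and> \<bar>x $ k\<bar> < 1"
  shows "newton_polyhedron c \<subseteq> {v. (\<chi> k. ln \<bar>x $ k\<bar>) \<bullet> v \<le> 0}"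
  unfolding newton_polyhedron_def
proof (rule hull_minimal)
  show "convex {v. (\<chi> k. ln \<bar>x $ k\<bar>) \<bullet> v \<le> 0}" by (rule convex_halfspace_le)
  show "(\<Union>\<alpha>\<in>{\<alpha>. c \<alpha> \<noteq> 0}. {v. \<forall>j. real (\<alpha> j) \<le> v $ j}) \<subseteq> {v. (\<chi> k. ln \<bar>x $ k\<bar>) \<bullet> v \<le> 0}"
  proof clarify
    fix \<alpha> and v :: "real^'n" assume v: "\<forall>j. real (\<alpha> j) \<le> v $ j"
    have "(\<chi> k. ln \<bar>x $ k\<bar>) \<bullet> v = (\<Sum>k\<in>UNIV. ln \<bar>x $ k\<bar> * v $ k)"
      by (simp add: inner_vec_def)
    also have "\<dots> \<le> 0"
    proof (rule sum_nonpos)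
      fix k
      have "\<bar>x $ k\<bar> < 1" "x $ k \<noteq> 0" using assms by auto
      then have "ln \<bar>x $ k\<bar> \<le> 0" by simp
      moreover have "0 \<le> v $ k" using v[rule_format, of k] by (meson of_nat_0_le_iff order_trans)
      ultimately show "ln \<bar>x $ k\<bar> * v $ k \<le> 0" by (rule mult_nonpos_nonneg)
    qed
    finally show "(\<chi> k. ln \<bar>x $ k\<bar>) \<bullet> v \<le> 0" .
  qed
qed

lemma bdd_newton:
  fixes x :: "real^'n::finite"
  assumes "\<forall>k. x $ k \<noteq> 0 \<and> \<bar>x $ k\<bar> < 1"
  shows "bdd_above ((\<lambda>v. abs_mono x (v - b)) ` newton_polyhedron c)"
proof (rule bdd_aboveI2)
  fix v assume "v \<in> newton_polyhedron c"
  with hull_sub[OF assms] have le: "(\<Sum>k\<in>UNIV. ln \<bar>x $ k\<bar> * v $ k) \<le> 0"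
    by (auto simp: inner_vec_def)
  have "abs_mono x (v - b) = exp (\<Sum>k\<in>UNIV. (v - b) $ k * ln \<bar>x $ k\<bar>)"
    using assms by (intro abs_mono_exp) auto
  also have "(\<Sum>k\<in>UNIV. (v - b) $ k * ln \<bar>x $ k\<bar>) = (\<Sum>k\<in>UNIV. ln \<bar>x $ k\<bar> * v $ k) - (\<Sum>k\<in>UNIV. b $ k * ln \<bar>x $ k\<bar>)"
    by (simp add: algebra_simps sum_subtractf)
  also have "exp \<dots> \<le> exp (- (\<Sum>k\<in>UNIV. b $ k * ln \<bar>x $ k\<bar>))" using le by simp
  finally show "abs_mono x (v - b) \<le> exp (- (\<Sum>k\<in>UNIV. b $ k * ln \<bar>x $ k\<bar>))" .
qed

lemma sup_ge:
  fixes x :: "real^'n::finite"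
  assumes "\<forall>k. x $ k \<noteq> 0 \<and> \<bar>x $ k\<bar> < 1" "c \<mu> \<noteq> 0"
  shows "abs_mono x ((\<chi> k. real (\<mu> k)) - b) \<le> (SUP v\<in>newton_polyhedron c. abs_mono x (v - b))"
proof (rule cSUP_upper[OF _ bdd_newton[OF assms(1)]])
  show "(\<chi> k. real (\<mu> k)) \<in> newton_polyhedron c"
    unfolding newton_polyhedron_def using assms(2) by (intro hull_inc) auto
qed

lemma mono_split_bound:
  assumes x: "\<forall>k. x $ k \<noteq> 0" "\<forall>k. \<bar>x $ k\<bar> \<le> \<rho>" and \<rho>: "0 < \<rho>" "\<rho> \<le> 1"
    and q: "\<forall>k. q k + \<beta> k = \<alpha> k" and \<mu>: "\<forall>k. \<mu> k \<le> \<alpha> k"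
  shows "\<bar>monomial q x\<bar> \<le> abs_mono x ((\<chi> k. real (\<mu> k)) - (\<chi> k. real (\<beta> k))) * (\<rho> ^ deg q / \<rho> ^ deg \<mu>)"
proof -
  have pt: "\<bar>x $ k\<bar> ^ q k \<le> \<bar>x $ k\<bar> powr (real (\<mu> k) - real (\<beta> k)) * (\<rho> ^ q k / \<rho> ^ \<mu> k)" for k
  proof -
    have ax: "\<bar>x $ k\<bar> > 0" using x by auto
    have "\<bar>x $ k\<bar> ^ q k = \<bar>x $ k\<bar> powr (real (q k))" using ax by (simp add: powr_realpow)
    also have "real (q k) = (real (\<mu> k) - real (\<beta> k)) + real (\<alpha> k - \<mu> k)"
      using q[rule_format, of k] \<mu>[rule_format, of k] by (simp add: of_nat_diff)
    also have "\<bar>x $ k\<bar> powr \<dots> = \<bar>x $ k\<bar> powr (real (\<mu> k) - real (\<beta> k)) * \<bar>x $ k\<bar> ^ (\<alpha> k - \<mu> k)"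
      using ax by (simp add: powr_add powr_realpow)
    also have "\<bar>x $ k\<bar> ^ (\<alpha> k - \<mu> k) \<le> \<rho> ^ (\<alpha> k - \<mu> k)"
      using x by (intro power_mono) auto
    also have "\<rho> ^ (\<alpha> k - \<mu> k) = \<rho> ^ \<alpha> k / \<rho> ^ \<mu> k"
      using \<rho> \<mu> by (simp add: power_diff)
    also have "\<dots> \<le> \<rho> ^ q k / \<rho> ^ \<mu> k"
      using \<rho> q[rule_format, of k] by (intro divide_right_mono power_decreasing) auto
    finally show ?thesis by (simp add: mult_left_mono)
  qed
  have "\<bar>monomial q x\<bar> = (\<Prod>k\<in>UNIV. \<bar>x $ k\<bar> ^ q k)"
    unfolding monomial_def by (simp add: abs_prod power_abs)
  also have "\<dots> \<le> (\<Prod>k\<in>UNIV. \<bar>x $ k\<bar> powr (real (\<mu> k) - real (\<beta> k)) * (\<rho> ^ q k / \<rho> ^ \<mu> k))"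
    by (rule prod_mono) (use pt in auto)
  also have "\<dots> = abs_mono x ((\<chi> k. real (\<mu> k)) - (\<chi> k. real (\<beta> k))) * (\<rho> ^ deg q / \<rho> ^ deg \<mu>)"
    unfolding abs_mono_def deg_def by (simp add: prod.distrib prod_dividef power_sum)
  finally show ?thesis .
qed

lemma single_bound:
  fixes g :: "real^'n::finite \<Rightarrow> real"
  assumes "Inv c g \<beta>"
  shows "\<exists>C\<ge>0. \<exists>\<delta>>0. ((\<forall>\<alpha>. c \<alpha> = 0) \<longrightarrow> C = 0) \<and> (\<forall>x. norm x < \<delta> \<and> (\<forall>j. x $ j \<noteq> 0) \<longrightarrow>
     \<bar>g x\<bar> \<le> C * (SUP v\<in>newton_polyhedron c. abs_mono x (v - (\<chi> j. real (\<beta> j)))))"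
proof -
  obtain c' p \<rho> where r: "rep g c' p \<rho>" and i: "\<And>\<alpha>. c' \<alpha> \<noteq> 0 \<Longrightarrow> c \<alpha> \<noteq> 0 \<and> (\<forall>k. p \<alpha> k + \<beta> k = \<alpha> k)"
    using assms unfolding Inv_def by blast
  from r have \<rho>: "0 < \<rho>" "\<rho> \<le> 1" and summ: "(\<lambda>\<alpha>. \<bar>c' \<alpha>\<bar> * \<rho> ^ deg (p \<alpha>)) summable_on UNIV"
    and hs: "\<And>x. (\<forall>k. \<bar>x $ k\<bar> < \<rho>) \<Longrightarrow> ((\<lambda>\<alpha>. c' \<alpha> * monomial (p \<alpha>) x) has_sum g x) UNIV"
    unfolding rep_def by auto
  obtain F where F: "finite F" "F \<subseteq> {\<alpha>. c \<alpha> \<noteq> 0}" "\<And>\<gamma>. \<gamma> \<in> {\<alpha>. c \<alpha> \<noteq> 0} \<Longrightarrow> \<exists>\<mu>\<in>F. \<forall>k. \<mu> k \<le> \<gamma> k"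
    using dickson[of "{\<alpha>. c \<alpha> \<noteq> 0}"] by blast
  define N where "N = (\<Sum>\<mu>\<in>F. deg \<mu>)"
  define K where "K = 1 / \<rho> ^ N"
  define A where "A = (\<Sum>\<^sub>\<infinity>\<alpha>. \<bar>c' \<alpha>\<bar> * \<rho> ^ deg (p \<alpha>))"
  define b where "b = (\<chi> j. real (\<beta> j))"
  have K: "K > 0" unfolding K_def using \<rho> by simp
  have A: "A \<ge> 0" unfolding A_def by (rule infsum_nonneg) (use \<rho> in auto)
  have A0: "A = 0" if "\<forall>\<alpha>. c \<alpha> = 0"
  proof -
    have "\<And>\<alpha>. c' \<alpha> = 0" using i that by blast
    then show ?thesis unfolding A_def by simp
  qed
  have main: "\<bar>g x\<bar> \<le> (A * K) * (SUP v\<in>newton_polyhedron c. abs_mono x (v - b))"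
    if x: "norm x < \<rho>" "\<forall>j. x $ j \<noteq> 0" for x
  proof -
    define sp where "sp = (SUP v\<in>newton_polyhedron c. abs_mono x (v - b))"
    have xb: "\<forall>k. \<bar>x $ k\<bar> < \<rho>" using x(1) component_le_norm_cart le_less_trans by blast
    then have xb': "\<forall>k. \<bar>x $ k\<bar> \<le> \<rho>" by (simp add: less_imp_le)
    have x1: "\<forall>k. x $ k \<noteq> 0 \<and> \<bar>x $ k\<bar> < 1" using xb x(2) \<rho>(2) by (meson less_le_trans)
    have pw: "\<bar>c' \<alpha> * monomial (p \<alpha>) x\<bar> \<le> \<bar>c' \<alpha>\<bar> * \<rho> ^ deg (p \<alpha>) * (K * sp)" for \<alpha>
    proof (cases "c' \<alpha> = 0")
      case True then show ?thesis by simp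
    next
      case False
      with i have ca: "c \<alpha> \<noteq> 0" and pa: "\<forall>k. p \<alpha> k + \<beta> k = \<alpha> k" by auto
      obtain \<mu> where \<mu>: "\<mu> \<in> F" "\<forall>k. \<mu> k \<le> \<alpha> k" using F(3)[of \<alpha>] ca by blast
      have c\<mu>: "c \<mu> \<noteq> 0" using F(2) \<mu>(1) by blast
      have m1: "\<bar>monomial (p \<alpha>) x\<bar> \<le> abs_mono x ((\<chi> k. real (\<mu> k)) - b) * (\<rho> ^ deg (p \<alpha>) / \<rho> ^ deg \<mu>)"
        unfolding b_def by (rule mono_split_bound[OF x(2) xb' \<rho> pa \<mu>(2)])
      have m2: "abs_mono x ((\<chi> k. real (\<mu> k)) - b) \<le> sp"
        unfolding sp_def by (rule sup_ge[where c=c and \<mu>=\<mu>, OF x1 c\<mu>])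
      have "deg \<mu> \<le> N" unfolding N_def by (rule member_le_sum) (use \<mu>(1) F(1) in auto)
      then have "\<rho> ^ N \<le> \<rho> ^ deg \<mu>" using \<rho> by (intro power_decreasing) auto
      then have "1 / \<rho> ^ deg \<mu> \<le> K" unfolding K_def using \<rho> by (intro divide_left_mono) auto
      then have m3: "\<rho> ^ deg (p \<alpha>) / \<rho> ^ deg \<mu> \<le> \<rho> ^ deg (p \<alpha>) * K"
        using \<rho> by (metis mult_left_mono times_divide_eq_right mult_1_right zero_le_power less_imp_le)
      have "\<bar>monomial (p \<alpha>) x\<bar> \<le> sp * (\<rho> ^ deg (p \<alpha>) * K)"
        using m1 m2 m3 abs_mono_nonneg[of x "(\<chi> k. real (\<mu> k)) - b"] \<rho>
        by (meson mult_mono order_trans zero_le_divide_iff zero_le_power less_imp_le)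
      then have "\<bar>c' \<alpha>\<bar> * \<bar>monomial (p \<alpha>) x\<bar> \<le> \<bar>c' \<alpha>\<bar> * (sp * (\<rho> ^ deg (p \<alpha>) * K))"
        by (rule mult_left_mono) simp
      then show ?thesis by (simp add: abs_mult algebra_simps)
    qed
    have abs_s: "(\<lambda>\<alpha>. norm (c' \<alpha> * monomial (p \<alpha>) x)) summable_on UNIV"
    proof (rule summable_on_comparison_test[OF summ])
      fix \<alpha>
      have "\<bar>monomial (p \<alpha>) x\<bar> \<le> \<rho> ^ deg (p \<alpha>)" by (rule abs_mono_le) (use xb' in auto)
      then show "norm (c' \<alpha> * monomial (p \<alpha>) x) \<le> \<bar>c' \<alpha>\<bar> * \<rho> ^ deg (p \<alpha>)"
        by (simp add: abs_mult mult_left_mono)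
    qed auto
    have gx: "g x = (\<Sum>\<^sub>\<infinity>\<alpha>. c' \<alpha> * monomial (p \<alpha>) x)" using hs[OF xb] by (simp add: infsumI)
    have "\<bar>g x\<bar> \<le> (\<Sum>\<^sub>\<infinity>\<alpha>. norm (c' \<alpha> * monomial (p \<alpha>) x))"
      unfolding gx using norm_infsum_bound[OF abs_s] by simp
    also have "\<dots> \<le> (\<Sum>\<^sub>\<infinity>\<alpha>. \<bar>c' \<alpha>\<bar> * \<rho> ^ deg (p \<alpha>) * (K * sp))"
      by (rule infsum_mono[OF abs_s summable_on_cmult_left[OF summ]]) (use pw in simp)
    also have "\<dots> = A * (K * sp)" unfolding A_def by (rule infsum_cmult_left')
    finally show ?thesis unfolding sp_def by (simp add: mult.assoc)
  qed
  show ?thesis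
    apply (rule exI[of _ "A * K"])
    apply (intro conjI)
    using A K apply simp
    apply (rule exI[of _ \<rho>])
    using \<rho> A0 main unfolding b_def by auto
qed

theorem corollary2p3:
  fixes S :: "real^'n::finite \<Rightarrow> real"
    and c :: "('n \<Rightarrow> nat) \<Rightarrow> real"
    and r :: real
    and \<beta>s :: "('n \<Rightarrow> nat) list"
  assumes r_pos: "r > 0"
    and series: "\<And>x. norm x < r \<Longrightarrow> ((\<lambda>\<alpha>. c \<alpha> * monomial \<alpha> x) has_sum S x) UNIV"
  shows "\<exists>C. \<exists>\<delta>>0. \<forall>x. norm x < \<delta> \<and> (\<forall>j. x $ j \<noteq> 0) \<longrightarrow>
           (\<forall>\<beta>\<in>set \<beta>s. \<bar>mixed_partial \<beta> S x\<bar>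
              \<le> C * (SUP \<alpha>\<in>newton_polyhedron c. abs_mono x (\<alpha> - (\<chi> j. real (\<beta> j)))))"
proof -
  let ?sp = "\<lambda>x \<beta>. (SUP \<alpha>\<in>newton_polyhedron c. abs_mono x (\<alpha> - (\<chi> j. real (\<beta> j))))"
  have I0: "Inv c S (\<lambda>_. 0)" by (rule Inv_base[OF r_pos series])
  have "\<forall>\<beta>. \<exists>C. C \<ge> 0 \<and> (\<exists>\<delta>>0. ((\<forall>\<alpha>. c \<alpha> = 0) \<longrightarrow> C = 0) \<and> (\<forall>x. norm x < \<delta> \<and> (\<forall>j. x $ j \<noteq> 0) \<longrightarrow>
     \<bar>mixed_partial \<beta> S x\<bar> \<le> C * ?sp x \<beta>))"
  proof
    fix \<beta>
    show "\<exists>C. C \<ge> 0 \<and> (\<exists>\<delta>>0. ((\<forall>\<alpha>. c \<alpha> = 0) \<longrightarrow> C = 0) \<and> (\<forall>x. norm x < \<delta> \<and> (\<forall>j. x $ j \<noteq> 0) \<longrightarrow>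
     \<bar>mixed_partial \<beta> S x\<bar> \<le> C * ?sp x \<beta>))"
      using single_bound[OF Inv_mixed[OF I0, of \<beta>]] by blast
  qed
  then obtain Cf where Cf: "\<forall>\<beta>. Cf \<beta> \<ge> 0 \<and> (\<exists>\<delta>>0. ((\<forall>\<alpha>. c \<alpha> = 0) \<longrightarrow> Cf \<beta> = 0) \<and> (\<forall>x. norm x < \<delta> \<and> (\<forall>j. x $ j \<noteq> 0) \<longrightarrow>
     \<bar>mixed_partial \<beta> S x\<bar> \<le> Cf \<beta> * ?sp x \<beta>))"
    by (rule exE[OF choice])
  then have "\<forall>\<beta>. \<exists>\<delta>. \<delta> > 0 \<and> ((\<forall>\<alpha>. c \<alpha> = 0) \<longrightarrow> Cf \<beta> = 0) \<and> (\<forall>x. norm x < \<delta> \<and> (\<forall>j. x $ j \<noteq> 0) \<longrightarrow>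
     \<bar>mixed_partial \<beta> S x\<bar> \<le> Cf \<beta> * ?sp x \<beta>)" by blast
  then obtain df where df: "\<forall>\<beta>. df \<beta> > 0 \<and> ((\<forall>\<alpha>. c \<alpha> = 0) \<longrightarrow> Cf \<beta> = 0) \<and> (\<forall>x. norm x < df \<beta> \<and> (\<forall>j. x $ j \<noteq> 0) \<longrightarrow>
     \<bar>mixed_partial \<beta> S x\<bar> \<le> Cf \<beta> * ?sp x \<beta>)"
    by (rule exE[OF choice])
  define C where "C = (\<Sum>\<beta>\<in>set \<beta>s. Cf \<beta>)"
  define \<delta> where "\<delta> = Min (insert 1 (df ` set \<beta>s))"
  have \<delta>: "\<delta> > 0" unfolding \<delta>_def using df by (subst Min_gr_iff) auto
  have \<delta>1: "\<delta> \<le> 1" "\<And>\<beta>. \<beta> \<in> set \<beta>s \<Longrightarrow> \<delta> \<le> df \<beta>" unfolding \<delta>_def by auto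
  have "\<forall>x. norm x < \<delta> \<and> (\<forall>j. x $ j \<noteq> 0) \<longrightarrow>
           (\<forall>\<beta>\<in>set \<beta>s. \<bar>mixed_partial \<beta> S x\<bar> \<le> C * ?sp x \<beta>)"
  proof (intro allI impI ballI)
    fix x :: "real^'n" and \<beta> assume x: "norm x < \<delta> \<and> (\<forall>j. x $ j \<noteq> 0)" and b: "\<beta> \<in> set \<beta>s"
    have "norm x < df \<beta>" using x \<delta>1(2)[OF b] by simp
    then have le: "\<bar>mixed_partial \<beta> S x\<bar> \<le> Cf \<beta> * ?sp x \<beta>" using df x by blast
    show "\<bar>mixed_partial \<beta> S x\<bar> \<le> C * ?sp x \<beta>"
    proof (cases "\<forall>\<alpha>. c \<alpha> = 0")
      case True
      then have "Cf \<beta> = 0" "C = 0" unfolding C_def using df by auto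
      then show ?thesis using le by simp
    next
      case False
      then obtain \<mu> where c\<mu>: "c \<mu> \<noteq> 0" by blast
      have x1: "\<forall>k. x $ k \<noteq> 0 \<and> \<bar>x $ k\<bar> < 1"
        using x \<delta>1(1) component_le_norm_cart by (metis le_less_trans less_le_trans)
      have "0 \<le> abs_mono x ((\<chi> k. real (\<mu> k)) - (\<chi> j. real (\<beta> j)))" by (rule abs_mono_nonneg)
      also have "\<dots> \<le> ?sp x \<beta>" by (rule sup_ge[where c=c and \<mu>=\<mu>, OF x1 c\<mu>])
      finally have sp0: "0 \<le> ?sp x \<beta>" .
      have "Cf \<beta> \<le> C" unfolding C_def using b Cf by (intro member_le_sum) auto
      then have "Cf \<beta> * ?sp x \<beta> \<le> C * ?sp x \<beta>" using sp0 by (rule mult_right_mono)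
      then show ?thesis using le by linarith
    qed
  qed
  then show ?thesis using \<delta> by blast
qed

end
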